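(* For any $(\boldsymbol{x},\boldsymbol{v}),(\boldsymbol{x}^\star,\boldsymbol{v}^\star)\in\mathbb{T}^3\times\mathbb{S}^2$ there exist $N\in\mathbb{N}$ and $\underline{\omega}^N=(\omega_1,\dots,\omega_N)\in\Omega_0^N$ such that $$f_{\underline{\omega}^N}(\boldsymbol{x})=\boldsymbol{x}^\star\qquad\text{and}\qquad \frac{D_{\boldsymbol{x}}f_{\underline{\omega}^N}\boldsymbol{v}}{|D_{\boldsymbol{x}}f_{\underline{\omega}^N}\boldsymbol{v}|}=\boldsymbol{v}^\star.$$
   Context: $\mathbb{T}^3=\mathbb{R}^3/(2\pi\mathbb{Z})^3$ with points $\boldsymbol{x}=(x,y,z)$; $\mathbb{S}^2\subset\mathbb{R}^3$ is the unit sphere. Fix $U>0$ and let $\Omega_0=[-U,U]^3\times[0,2\pi)^3$, with elements $\omega=(\mathsf{A},\mathsf{B},\mathsf{C},\alpha,\beta,\gamma)$. Define maps of $\mathbb{T}^3$: $f_{(\mathsf{A},\alpha)}(x,y,z)=(x+\mathsf{A}\sin(z+\alpha),\ y+\mathsf{A}\cos(z+\alpha),\ z)$, $f_{(\mathsf{B},\beta)}(x,y,z)=(x,\ y+\mathsf{B}\sin(x+\beta),\ z+\mathsf{B}\cos(x+\beta))$, $f_{(\mathsf{C},\gamma)}(x,y,z)=(x+\mathsf{C}\cos(y+\gamma),\ y,\ z+\mathsf{C}\sin(y+\gamma))$, and $f_\omega=f_{(\mathsf{C},\gamma)}\circ f_{(\mathsf{B},\beta)}\circ f_{(\mathsf{A},\alpha)}$.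 For $\underline{\omega}^N=(\omega_1,\dots,\omega_N)\in\Omega_0^N$, $f_{\underline{\omega}^N}=f_{\omega_N}\circ\cdots\circ f_{\omega_1}$, and $D_{\boldsymbol{x}}f_{\underline{\omega}^N}$ is its Jacobian matrix at $\boldsymbol{x}$. *)

theory Defs
  imports "HOL-Analysis.Analysis"
begin

text \<open>Points of the torus T^3 = R^3/(2 pi Z)^3 are represented by lifts in real^3;
  the maps below are the natural lifts of the torus maps.\<close>

definition torus_eq :: "real^3 \<Rightarrow> real^3 \<Rightarrow> bool" where
  "torus_eq p q \<longleftrightarrow> (\<forall>i. \<exists>k::int. p $ i - q $ i = 2 * pi * of_int k)"

definition fA :: "real \<Rightarrow> real \<Rightarrow> real^3 \<Rightarrow> real^3" where
  "fA A \<alpha> p = vector [p$1 + A * sin (p$3 + \<alpha>), p$2 + A * cos (p$3 + \<alpha>), p$3]"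

definition fB :: "real \<Rightarrow> real \<Rightarrow> real^3 \<Rightarrow> real^3" where
  "fB B \<beta> p = vector [p$1, p$2 + B * sin (p$1 + \<beta>), p$3 + B * cos (p$1 + \<beta>)]"

definition fC :: "real \<Rightarrow> real \<Rightarrow> real^3 \<Rightarrow> real^3" where
  "fC C \<gamma> p = vector [p$1 + C * cos (p$2 + \<gamma>), p$2, p$3 + C * sin (p$2 + \<gamma>)]"

type_synonym param = "real \<times> real \<times> real \<times> real \<times> real \<times> real"

fun f_omega :: "param \<Rightarrow> real^3 \<Rightarrow> real^3" where
  "f_omega (A, B, C, \<alpha>, \<beta>, \<gamma>) = fC C \<gamma> \<circ> fB B \<beta> \<circ> fA A \<alpha>"

definition Omega0 :: "real \<Rightarrow> param set" where
  "Omega0 U = {(A, B, C, \<alpha>, \<beta>, \<gamma>). \<bar>A\<bar> \<le> U \<and> \<bar>B\<bar> \<le> U \<and> \<bar>C\<bar> \<le> U \<and>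
      0 \<le> \<alpha> \<and> \<alpha> < 2 * pi \<and> 0 \<le> \<beta> \<and> \<beta> < 2 * pi \<and> 0 \<le> \<gamma> \<and> \<gamma> < 2 * pi}"

text \<open>f_{[w1,...,wN]} = f_{wN} o ... o f_{w1}\<close>
definition f_seq :: "param list \<Rightarrow> real^3 \<Rightarrow> real^3" where
  "f_seq ws = foldl (\<lambda>g w. f_omega w \<circ> g) id ws"

end

theory Submission
  imports Defs
begin

lemma vec3_eq: "(x::real^3) = y \<longleftrightarrow> x$1 = y$1 \<and> x$2 = y$2 \<and> x$3 = y$3"
  by (simp add: vec_eq_iff forall_3)

lemma nth_deriv: "((\<lambda>p::real^3. p$i) has_derivative (\<lambda>h. h$i)) F"
  by (rule bounded_linear_imp_has_derivative[OF bounded_linear_vec_nth])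

lemma fA_eq: "fA A \<alpha> = (\<lambda>p. p + (A * sin (p$3+\<alpha>)) *\<^sub>R vector[1,0,0] + (A * cos (p$3+\<alpha>)) *\<^sub>R vector[0,1,0])"
  by (rule ext) (simp add: fA_def vec3_eq)

lemma fB_eq: "fB B \<beta> = (\<lambda>p. p + (B * sin (p$1+\<beta>)) *\<^sub>R vector[0,1,0] + (B * cos (p$1+\<beta>)) *\<^sub>R vector[0,0,1])"
  by (rule ext) (simp add: fB_def vec3_eq)

lemma fC_eq: "fC C \<gamma> = (\<lambda>p. p + (C * cos (p$2+\<gamma>)) *\<^sub>R vector[1,0,0] + (C * sin (p$2+\<gamma>)) *\<^sub>R vector[0,0,1])"
  by (rule ext) (simp add: fC_def vec3_eq)

lemma fA_deriv: "(fA A \<alpha> has_derivative (\<lambda>h. h + (A * cos (p$3+\<alpha>) * h$3) *\<^sub>R vector[1,0,0] - (A * sin (p$3+\<alpha>) * h$3) *\<^sub>R vector[0,1,0])) (at p)"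
  unfolding fA_eq
  apply (rule derivative_eq_intros nth_deriv refl)+
  apply (rule ext) apply (simp add: vec3_eq)
  done

lemma fB_deriv: "(fB B \<beta> has_derivative (\<lambda>h. h + (B * cos (p$1+\<beta>) * h$1) *\<^sub>R vector[0,1,0] - (B * sin (p$1+\<beta>) * h$1) *\<^sub>R vector[0,0,1])) (at p)"
  unfolding fB_eq
  apply (rule derivative_eq_intros nth_deriv refl)+
  apply (rule ext) apply (simp add: vec3_eq)
  done

lemma fC_deriv: "(fC C \<gamma> has_derivative (\<lambda>h. h - (C * sin (p$2+\<gamma>) * h$2) *\<^sub>R vector[1,0,0] + (C * cos (p$2+\<gamma>) * h$2) *\<^sub>R vector[0,0,1])) (at p)"
  unfolding fC_eq
  apply (rule derivative_eq_intros nth_deriv refl)+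
  apply (rule ext) apply (simp add: vec3_eq)
  done

lemma fA0: "fA 0 a = id" by (rule ext) (simp add: fA_def vec3_eq)
lemma fB0: "fB 0 a = id" by (rule ext) (simp add: fB_def vec3_eq)
lemma fC0: "fC 0 a = id" by (rule ext) (simp add: fC_def vec3_eq)

lemma foldl_comp: "foldl (\<lambda>g w. f_omega w \<circ> g) (h::real^3\<Rightarrow>real^3) ws = f_seq ws \<circ> h"
proof (induction ws arbitrary: h)
  case Nil
  then show ?case by (simp add: f_seq_def)
next
  case (Cons a ws)
  have e: "f_seq (a # ws) = f_seq ws \<circ> f_omega a"
    unfolding f_seq_def foldl_Cons comp_id using Cons[of "f_omega a"] unfolding f_seq_def .
  have "foldl (\<lambda>g w. f_omega w \<circ> g) h (a # ws) = f_seq ws \<circ> (f_omega a \<circ> h)"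
    unfolding foldl_Cons by (rule Cons)
  then show ?case unfolding e by (simp only: o_assoc)
qed

lemma f_seq_append: "f_seq (ws1 @ ws2) = f_seq ws2 \<circ> f_seq ws1"
proof -
  have "f_seq (ws1 @ ws2) = foldl (\<lambda>g w. f_omega w \<circ> g) (f_seq ws1) ws2"
    unfolding f_seq_def by (simp only: foldl_append)
  then show ?thesis by (simp only: foldl_comp)
qed

lemma f_seq_single: "f_seq [w] = f_omega w"
  by (simp add: f_seq_def)

definition reach :: "real \<Rightarrow> real^3 \<Rightarrow> real^3 \<Rightarrow> real^3 \<Rightarrow> real^3 \<Rightarrow> bool" where
  "reach U p w q w' \<longleftrightarrow> (\<exists>ws L. set ws \<subseteq> Omega0 U \<and> f_seq ws p = q \<and>
      (f_seq ws has_derivative L) (at p) \<and> L w = w')"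

lemma reach_refl: "reach U p w p w"
  unfolding reach_def
  by (rule exI[of _ "[]"], rule exI[of _ id]) (simp add: f_seq_def has_derivative_id)

lemma reach_trans:
  assumes "reach U p w q w'" "reach U q w' r w''"
  shows "reach U p w r w''"
proof -
  obtain ws1 L1 where 1: "set ws1 \<subseteq> Omega0 U" "f_seq ws1 p = q"
      "(f_seq ws1 has_derivative L1) (at p)" "L1 w = w'"
    using assms(1) unfolding reach_def by blast
  obtain ws2 L2 where 2: "set ws2 \<subseteq> Omega0 U" "f_seq ws2 q = r"
      "(f_seq ws2 has_derivative L2) (at q)" "L2 w' = w''"
    using assms(2) unfolding reach_def by blast
  have "(f_seq ws2 \<circ> f_seq ws1 has_derivative L2 \<circ> L1) (at p)"
    by (rule diff_chain_at) (use 1 2 in auto)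
  then show ?thesis unfolding reach_def
    using 1 2 by (intro exI[of _ "ws1 @ ws2"] exI[of _ "L2 \<circ> L1"]) (auto simp: f_seq_append)
qed

lemma reach_eq: "reach U p w q w' \<Longrightarrow> q = q2 \<Longrightarrow> w' = w2 \<Longrightarrow> reach U p w q2 w2"
  by simp

lemma phase:
  obtains A \<alpha> where "\<bar>A\<bar> \<le> \<bar>d1\<bar> + \<bar>d2\<bar>" "0 \<le> \<alpha>" "\<alpha> < 2*pi"
    "A * sin (z+\<alpha>) = d1" "A * cos (z+\<alpha>) = d2"
proof (cases "d1 = 0 \<and> d2 = 0")
  case True
  then show ?thesis using that[of 0 0] by simp
next
  case False
  define r where "r = sqrt (d1\<^sup>2 + d2\<^sup>2)"
  have rpos: "r > 0" using False unfolding r_def by (simp add: sum_power2_gt_zero_iff)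
  have "(d2/r)\<^sup>2 + (d1/r)\<^sup>2 = 1" using rpos False unfolding r_def
    by (simp add: power_divide add_divide_distrib[symmetric])
  then obtain t where t: "0 \<le> t" "t < 2*pi" "d2/r = cos t" "d1/r = sin t"
    by (rule sincos_total_2pi)
  define k where "k = floor ((t - z) / (2*pi))"
  define \<alpha> where "\<alpha> = t - z - of_int k * (2*pi)"
  have k1: "of_int k \<le> (t - z) / (2*pi)" unfolding k_def by (rule of_int_floor_le)
  have k2: "(t - z) / (2*pi) < of_int k + 1" unfolding k_def by (rule real_of_int_floor_add_one_gt)
  have a0: "0 \<le> \<alpha>" using k1 unfolding \<alpha>_def by (simp add: field_simps)
  have a1: "\<alpha> < 2*pi" using k2 unfolding \<alpha>_def by (simp add: field_simps)
  have za: "z + \<alpha> = t - of_int k * (2 * of_real pi)" unfolding \<alpha>_def by simp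
  have s: "sin (z+\<alpha>) = sin t" unfolding za by (rule sin.minus_of_int)
  have c: "cos (z+\<alpha>) = cos t" unfolding za by (rule cos.minus_of_int)
  show ?thesis
  proof (rule that[of r \<alpha>])
    show "\<bar>r\<bar> \<le> \<bar>d1\<bar> + \<bar>d2\<bar>" using rpos unfolding r_def by (simp add: sqrt_sum_squares_le_sum_abs)
    show "r * sin (z + \<alpha>) = d1" using s t rpos by (simp add: field_simps)
    show "r * cos (z + \<alpha>) = d2" using c t rpos by (simp add: field_simps)
  qed (use a0 a1 in auto)
qed


lemma moveA:
  assumes "\<bar>d1\<bar> + \<bar>d2\<bar> \<le> U"
  shows "reach U p w (vector[p$1 + d1, p$2 + d2, p$3]) (vector[w$1 + w$3 * d2, w$2 - w$3 * d1, w$3])"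
proof -
  obtain A \<alpha> where h: "\<bar>A\<bar> \<le> \<bar>d1\<bar> + \<bar>d2\<bar>" "0 \<le> \<alpha>" "\<alpha> < 2*pi"
      "A * sin (p$3+\<alpha>) = d1" "A * cos (p$3+\<alpha>) = d2"
    by (rule phase)
  let ?ws = "[(A,0,0,\<alpha>,0,0)]"
  have U0: "0 \<le> U" using assms by linarith
  have fs: "f_seq ?ws = fA A \<alpha>" by (simp add: f_seq_single fA0 fB0 fC0)
  have om: "set ?ws \<subseteq> Omega0 U" using h assms U0 by (simp add: Omega0_def)
  have der: "(f_seq ?ws has_derivative (\<lambda>h. h + (d2 * h$3) *\<^sub>R vector[1,0,0] - (d1 * h$3) *\<^sub>R vector[0,1,0])) (at p)"
    unfolding fs using fA_deriv[of A \<alpha> p] unfolding h(4) h(5) .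
  have val: "f_seq ?ws p = vector[p$1 + d1, p$2 + d2, p$3]"
    unfolding fs fA_def h(4) h(5) by (simp add: vec3_eq)
  show ?thesis unfolding reach_def
    by (rule exI[of _ ?ws], rule exI[of _ "\<lambda>h. h + (d2 * h$3) *\<^sub>R vector[1,0,0] - (d1 * h$3) *\<^sub>R vector[0,1,0]"]) (use om der val in \<open>simp add: vec3_eq\<close>)
qed

lemma moveB:
  assumes "\<bar>e1\<bar> + \<bar>e2\<bar> \<le> U"
  shows "reach U p w (vector[p$1, p$2 + e1, p$3 + e2]) (vector[w$1, w$2 + w$1 * e2, w$3 - w$1 * e1])"
proof -
  obtain B \<beta> where h: "\<bar>B\<bar> \<le> \<bar>e1\<bar> + \<bar>e2\<bar>" "0 \<le> \<beta>" "\<beta> < 2*pi"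
      "B * sin (p$1+\<beta>) = e1" "B * cos (p$1+\<beta>) = e2"
    by (rule phase)
  let ?ws = "[(0,B,0,0,\<beta>,0)]"
  have U0: "0 \<le> U" using assms by linarith
  have fs: "f_seq ?ws = fB B \<beta>" by (simp add: f_seq_single fA0 fB0 fC0)
  have om: "set ?ws \<subseteq> Omega0 U" using h assms U0 by (simp add: Omega0_def)
  have der: "(f_seq ?ws has_derivative (\<lambda>h. h + (e2 * h$1) *\<^sub>R vector[0,1,0] - (e1 * h$1) *\<^sub>R vector[0,0,1])) (at p)"
    unfolding fs using fB_deriv[of B \<beta> p] unfolding h(4) h(5) .
  have val: "f_seq ?ws p = vector[p$1, p$2 + e1, p$3 + e2]"
    unfolding fs fB_def h(4) h(5) by (simp add: vec3_eq)
  show ?thesis unfolding reach_def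
    by (rule exI[of _ ?ws], rule exI[of _ "\<lambda>h. h + (e2 * h$1) *\<^sub>R vector[0,1,0] - (e1 * h$1) *\<^sub>R vector[0,0,1]"]) (use om der val in \<open>simp add: vec3_eq\<close>)
qed

lemma moveC:
  assumes "\<bar>g1\<bar> + \<bar>g2\<bar> \<le> U"
  shows "reach U p w (vector[p$1 + g1, p$2, p$3 + g2]) (vector[w$1 - w$2 * g2, w$2, w$3 + w$2 * g1])"
proof -
  obtain C \<gamma> where h: "\<bar>C\<bar> \<le> \<bar>g2\<bar> + \<bar>g1\<bar>" "0 \<le> \<gamma>" "\<gamma> < 2*pi"
      "C * sin (p$2+\<gamma>) = g2" "C * cos (p$2+\<gamma>) = g1"
    by (rule phase)
  let ?ws = "[(0,0,C,0,0,\<gamma>)]"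
  have U0: "0 \<le> U" using assms by linarith
  have fs: "f_seq ?ws = fC C \<gamma>" by (simp add: f_seq_single fA0 fB0 fC0)
  have om: "set ?ws \<subseteq> Omega0 U" using h assms U0 by (simp add: Omega0_def)
  have der: "(f_seq ?ws has_derivative (\<lambda>h. h - (g2 * h$2) *\<^sub>R vector[1,0,0] + (g1 * h$2) *\<^sub>R vector[0,0,1])) (at p)"
    unfolding fs using fC_deriv[of C \<gamma> p] unfolding h(4) h(5) .
  have val: "f_seq ?ws p = vector[p$1 + g1, p$2, p$3 + g2]"
    unfolding fs fC_def h(4) h(5) by (simp add: vec3_eq)
  show ?thesis unfolding reach_def
    by (rule exI[of _ ?ws], rule exI[of _ "\<lambda>h. h - (g2 * h$2) *\<^sub>R vector[1,0,0] + (g1 * h$2) *\<^sub>R vector[0,0,1]"]) (use om der val in \<open>simp add: vec3_eq\<close>)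
qed

lemma split_steps:
  assumes "U > 0"
  obtains n :: nat where "real n > 0" "\<bar>t1 / real n\<bar> + \<bar>t2 / real n\<bar> \<le> U"
proof -
  obtain n::nat where n: "(\<bar>t1\<bar>+\<bar>t2\<bar>)/U < real n" using reals_Archimedean2 by blast
  have "0 \<le> (\<bar>t1\<bar>+\<bar>t2\<bar>)/U" using assms by simp
  then have npos: "real n > 0" using n by linarith
  have "\<bar>t1\<bar>+\<bar>t2\<bar> < real n * U" using n assms by (simp add: pos_divide_less_eq mult.commute)
  then have "(\<bar>t1\<bar>+\<bar>t2\<bar>) / real n \<le> U" using npos by (simp add: pos_divide_le_eq mult.commute)
  then have "\<bar>t1 / real n\<bar> + \<bar>t2 / real n\<bar> \<le> U" by (simp add: abs_divide add_divide_distrib)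
  then show ?thesis using that npos by blast
qed

lemma bigA:
  assumes "U > 0"
  shows "reach U p w (vector[p$1 + t1, p$2 + t2, p$3]) (vector[w$1 + w$3 * t2, w$2 - w$3 * t1, w$3])"
proof -
  obtain n :: nat where npos: "real n > 0" and dU: "\<bar>t1 / real n\<bar> + \<bar>t2 / real n\<bar> \<le> U"
    using split_steps[OF assms] by blast
  define d1 where "d1 = t1 / real n"
  define d2 where "d2 = t2 / real n"
  have dU': "\<bar>d1\<bar> + \<bar>d2\<bar> \<le> U" using dU unfolding d1_def d2_def .
  have "reach U p w (vector[p$1 + real j * d1, p$2 + real j * d2, p$3])
      (vector[w$1 + real j * (w$3 * d2), w$2 - real j * (w$3 * d1), w$3])" for j
  proof (induction j)
    case 0 show ?case using reach_refl[of U p w] by (rule reach_eq) (simp_all add: vec3_eq)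
  next
    case (Suc j)
    from reach_trans[OF Suc moveA[OF dU']] show ?case
      by (rule reach_eq) (simp_all add: vec3_eq algebra_simps)
  qed
  from this[of n] show ?thesis by (rule reach_eq) (use npos in \<open>simp_all add: vec3_eq d1_def d2_def\<close>)
qed

lemma bigB:
  assumes "U > 0"
  shows "reach U p w (vector[p$1, p$2 + t1, p$3 + t2]) (vector[w$1, w$2 + w$1 * t2, w$3 - w$1 * t1])"
proof -
  obtain n :: nat where npos: "real n > 0" and dU: "\<bar>t1 / real n\<bar> + \<bar>t2 / real n\<bar> \<le> U"
    using split_steps[OF assms] by blast
  define d1 where "d1 = t1 / real n"
  define d2 where "d2 = t2 / real n"
  have dU': "\<bar>d1\<bar> + \<bar>d2\<bar> \<le> U" using dU unfolding d1_def d2_def .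
  have "reach U p w (vector[p$1, p$2 + real j * d1, p$3 + real j * d2])
      (vector[w$1, w$2 + real j * (w$1 * d2), w$3 - real j * (w$1 * d1)])" for j
  proof (induction j)
    case 0 show ?case using reach_refl[of U p w] by (rule reach_eq) (simp_all add: vec3_eq)
  next
    case (Suc j)
    from reach_trans[OF Suc moveB[OF dU']] show ?case
      by (rule reach_eq) (simp_all add: vec3_eq algebra_simps)
  qed
  from this[of n] show ?thesis by (rule reach_eq) (use npos in \<open>simp_all add: vec3_eq d1_def d2_def\<close>)
qed

lemma bigC:
  assumes "U > 0"
  shows "reach U p w (vector[p$1 + t1, p$2, p$3 + t2]) (vector[w$1 - w$2 * t2, w$2, w$3 + w$2 * t1])"
proof -
  obtain n :: nat where npos: "real n > 0" and dU: "\<bar>t1 / real n\<bar> + \<bar>t2 / real n\<bar> \<le> U"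
    using split_steps[OF assms] by blast
  define d1 where "d1 = t1 / real n"
  define d2 where "d2 = t2 / real n"
  have dU': "\<bar>d1\<bar> + \<bar>d2\<bar> \<le> U" using dU unfolding d1_def d2_def .
  have "reach U p w (vector[p$1 + real j * d1, p$2, p$3 + real j * d2])
      (vector[w$1 - real j * (w$2 * d2), w$2, w$3 + real j * (w$2 * d1)])" for j
  proof (induction j)
    case 0 show ?case using reach_refl[of U p w] by (rule reach_eq) (simp_all add: vec3_eq)
  next
    case (Suc j)
    from reach_trans[OF Suc moveC[OF dU']] show ?case
      by (rule reach_eq) (simp_all add: vec3_eq algebra_simps)
  qed
  from this[of n] show ?thesis by (rule reach_eq) (use npos in \<open>simp_all add: vec3_eq d1_def d2_def\<close>)
qed


definition Rr :: "real \<Rightarrow> real^3 \<Rightarrow> real^3 \<Rightarrow> bool" where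
  "Rr U w w' \<longleftrightarrow> (\<exists>\<delta>. \<forall>p. reach U p w (p + \<delta>) w')"

lemma Rr_trans: assumes "Rr U w w'" "Rr U w' w''" shows "Rr U w w''"
proof -
  obtain d1 where 1: "\<And>p. reach U p w (p + d1) w'" using assms(1) unfolding Rr_def by blast
  obtain d2 where 2: "\<And>p. reach U p w' (p + d2) w''" using assms(2) unfolding Rr_def by blast
  have "reach U p w (p + (d1 + d2)) w''" for p
    using reach_trans[OF 1[of p] 2[of "p + d1"]] by (simp add: add.assoc)
  then show ?thesis unfolding Rr_def by blast
qed

lemma setA: assumes "U > 0" "w$3 \<noteq> 0" shows "Rr U w (vector[a,b,w$3])"
proof -
  have "reach U p w (p + vector[(w$2 - b)/w$3, (a - w$1)/w$3, 0]) (vector[a,b,w$3])" for p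
    using bigA[OF assms(1), of p w "(w$2 - b)/w$3" "(a - w$1)/w$3"]
    by (rule reach_eq) (use assms(2) in \<open>simp_all add: vec3_eq\<close>)
  then show ?thesis unfolding Rr_def by blast
qed

lemma setB: assumes "U > 0" "w$1 \<noteq> 0" shows "Rr U w (vector[w$1,b,c])"
proof -
  have "reach U p w (p + vector[0, (w$3 - c)/w$1, (b - w$2)/w$1]) (vector[w$1,b,c])" for p
    using bigB[OF assms(1), of p w "(w$3 - c)/w$1" "(b - w$2)/w$1"]
    by (rule reach_eq) (use assms(2) in \<open>simp_all add: vec3_eq\<close>)
  then show ?thesis unfolding Rr_def by blast
qed

lemma setC: assumes "U > 0" "w$2 \<noteq> 0" shows "Rr U w (vector[a,w$2,c])"
proof -
  have "reach U p w (p + vector[(c - w$3)/w$2, 0, (w$1 - a)/w$2]) (vector[a,w$2,c])" for p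
    using bigC[OF assms(1), of p w "(c - w$3)/w$2" "(w$1 - a)/w$2"]
    by (rule reach_eq) (use assms(2) in \<open>simp_all add: vec3_eq\<close>)
  then show ?thesis unfolding Rr_def by blast
qed

lemma to_one: assumes "U > 0" "w \<noteq> 0" shows "Rr U w (vector[1,1,1])"
proof -
  have "w$1 \<noteq> 0 \<or> w$2 \<noteq> 0 \<or> w$3 \<noteq> 0" using assms(2) by (simp add: vec3_eq)
  moreover have ?thesis if h: "w$1 \<noteq> 0"
  proof -
    have "Rr U w (vector[w$1,1,1])" by (rule setB[OF assms(1) h])
    moreover have "Rr U (vector[w$1,1,1]) (vector[1,1,1])"
      using setC[OF assms(1), of "vector[w$1,1,1]" 1 1] by simp
    ultimately show ?thesis by (rule Rr_trans)
  qed
  moreover have ?thesis if h: "w$2 \<noteq> 0"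
  proof -
    have "Rr U w (vector[1,w$2,1])" by (rule setC[OF assms(1) h])
    moreover have "Rr U (vector[1,w$2,1]) (vector[1,1,1])"
      using setA[OF assms(1), of "vector[1,w$2,1]" 1 1] by simp
    ultimately show ?thesis by (rule Rr_trans)
  qed
  moreover have ?thesis if h: "w$3 \<noteq> 0"
  proof -
    have "Rr U w (vector[1,1,w$3])" by (rule setA[OF assms(1) h])
    moreover have "Rr U (vector[1,1,w$3]) (vector[1,1,1])"
      using setB[OF assms(1), of "vector[1,1,w$3]" 1 1] by simp
    ultimately show ?thesis by (rule Rr_trans)
  qed
  ultimately show ?thesis by blast
qed

lemma from_one: assumes "U > 0" "w \<noteq> 0" shows "Rr U (vector[1,1,1]) w"
proof -
  have w: "w = vector[w$1, w$2, w$3]" by (simp add: vec3_eq)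
  have "w$1 \<noteq> 0 \<or> w$2 \<noteq> 0 \<or> w$3 \<noteq> 0" using assms(2) by (simp add: vec3_eq)
  moreover have ?thesis if h: "w$1 \<noteq> 0"
  proof -
    have "Rr U (vector[1,1,1]) (vector[w$1,1,1])"
      using setC[OF assms(1), of "vector[1,1,1]" "w$1" 1] by simp
    moreover have "Rr U (vector[w$1,1,1]) (vector[w$1,w$2,w$3])"
      using setB[OF assms(1), of "vector[w$1,1,1]" "w$2" "w$3"] h by simp
    ultimately show ?thesis using w by (metis Rr_trans)
  qed
  moreover have ?thesis if h: "w$2 \<noteq> 0"
  proof -
    have "Rr U (vector[1,1,1]) (vector[w$1,w$2,1])"
      using setA[OF assms(1), of "vector[1,1,1]" "w$1" "w$2"] by simp
    moreover have "Rr U (vector[w$1,w$2,1]) (vector[w$1,w$2,w$3])"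
      using setC[OF assms(1), of "vector[w$1,w$2,1]" "w$1" "w$3"] h by simp
    ultimately show ?thesis using w by (metis Rr_trans)
  qed
  moreover have ?thesis if h: "w$3 \<noteq> 0"
  proof -
    have "Rr U (vector[1,1,1]) (vector[1,w$2,w$3])"
      using setB[OF assms(1), of "vector[1,1,1]" "w$2" "w$3"] by simp
    moreover have "Rr U (vector[1,w$2,w$3]) (vector[w$1,w$2,w$3])"
      using setA[OF assms(1), of "vector[1,w$2,w$3]" "w$1" "w$2"] h by simp
    ultimately show ?thesis using w by (metis Rr_trans)
  qed
  ultimately show ?thesis by blast
qed

lemma Rr_any: assumes "U > 0" "w \<noteq> 0" "w' \<noteq> 0" shows "Rr U w w'"
  using Rr_trans[OF to_one[OF assms(1,2)] from_one[OF assms(1,3)]] .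

lemma pos_move: assumes "U > 0"
  shows "reach U p (vector[0,1,0]) q (vector[0,1,0])"
proof -
  have 1: "reach U p (vector[0,1,0]) (vector[q$1, q$2, p$3]) (vector[0,1,0])"
    using bigA[OF assms, of p "vector[0,1,0]" "q$1 - p$1" "q$2 - p$2"]
    by (rule reach_eq) simp_all
  have 2: "reach U (vector[q$1, q$2, p$3]) (vector[0,1,0]) q (vector[0,1,0])"
    using bigB[OF assms, of "vector[q$1, q$2, p$3]" "vector[0,1,0]" 0 "q$3 - p$3"]
    by (rule reach_eq) (simp_all add: vec3_eq)
  show ?thesis by (rule reach_trans[OF 1 2])
qed

theorem proposition3p2:
  fixes U :: real and x v xs vs :: "real^3"
  assumes "U > 0" and "norm v = 1" and "norm vs = 1"
  shows "\<exists>ws. ws \<noteq> [] \<and> set ws \<subseteq> Omega0 U \<and>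
           torus_eq (f_seq ws x) xs \<and>
           (let w = frechet_derivative (f_seq ws) (at x) v in (1 / norm w) *\<^sub>R w = vs)"
proof -
  define e where "e = (vector[0,1,0] :: real^3)"
  have v0: "v \<noteq> 0" using assms(2) by auto
  have vs0: "vs \<noteq> 0" using assms(3) by auto
  have e0: "e \<noteq> 0" unfolding e_def by (simp add: vec3_eq)
  obtain d1 where d1: "\<And>p. reach U p v (p + d1) e"
    using Rr_any[OF assms(1) v0 e0] unfolding Rr_def by blast
  obtain d3 where d3: "\<And>p. reach U p e (p + d3) vs"
    using Rr_any[OF assms(1) e0 vs0] unfolding Rr_def by blast
  have pm: "reach U (x + d1) e (xs - d3) e"
    unfolding e_def by (rule pos_move[OF assms(1)])
  have "reach U x v (xs - d3) e"
    by (rule reach_trans[OF d1[of x] pm])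
  from reach_trans[OF this d3[of "xs - d3"]] have "reach U x v xs vs" by simp
  then obtain ws L where ws: "set ws \<subseteq> Omega0 U" "f_seq ws x = xs"
      "(f_seq ws has_derivative L) (at x)" "L v = vs"
    unfolding reach_def by blast
  define w0 where "w0 = ((0,0,0,0,0,0) :: param)"
  have fw0: "f_omega w0 = id" by (simp add: w0_def fA0 fB0 fC0)
  have fs: "f_seq (w0 # ws) = f_seq ws" by (simp add: f_seq_def fw0)
  have w0O: "w0 \<in> Omega0 U" using assms(1) by (simp add: w0_def Omega0_def)
  have fd: "frechet_derivative (f_seq ws) (at x) = L" using frechet_derivative_at[OF ws(3)] by simp
  have te: "torus_eq xs xs" unfolding torus_eq_def by (auto intro: exI[of _ 0])
  show ?thesis
    by (rule exI[of _ "w0 # ws"]) (use ws w0O te assms(3) in \<open>simp add: fs fd Let_def\<close>)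
qed

end
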